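(* Let $R$ be a commutative multiplicative hyperring with identity, let $\alpha$ be a good endomorphism of $R$, let $I$ be an $\alpha$-prime hyperideal of $R$, and let $S$ be a subset of $R$. Then $(I:S)$ is an $\alpha$-prime hyperideal of $R$.
   Context: A multiplicative hyperring is an abelian group $(R,+)$ with a hyperoperation $\circ:R\times R\to \mathcal P^*(R)$ (nonempty subsets) such that $a\circ(b\circ c)=(a\circ b)\circ c$, $a\circ(b+c)\subseteq a\circ b+a\circ c$, $(b+c)\circ a\subseteq b\circ a+c\circ a$, and $a\circ(-b)=(-a)\circ b=-(a\circ b)$. Products of subsets are unions of elementwise products. Commutative means $a\circ b=b\circ a$. An identity $1$ satisfies $a\in1\circ a$ for all $a$. A hyperideal is a nonempty $I\subseteq R$ closed under subtraction with $r\circ x\subseteq I$ for $r\in R$, $x\in I$. Standing assumption: every hyperideal is a $\mathbf C$-hyperideal, i.e. for every finite product $A=r_1\circ\cdots\circ r_n$, $A\cap I\ne\emptyset$ implies $A\subseteq I$. $(I:S)=\{r\in R: r\circ s\subseteq I \text{ for all } s\in S\}$. A good endomorphism $\alpha$ satisfies $\alpha(x+y)=\alpha(x)+\alpha(y)$ and $\alpha(x\circ y)=\alpha(x)\circ\alpha(y)$. A hyperideal $I$ is $\alpha$-prime if for all $x,y$, $x\circ y\subseteq I$ implies $x\in I$ or $\alpha(y)\in I$; properness is not part of this definition. *)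

theory Defs
  imports Main
begin

text \<open>The additive abelian group (R,+) is the whole type 'a (class ab_group_add);
  the hyperoperation is m :: 'a => 'a => 'a set.\<close>

definition setplus :: "'a::plus set \<Rightarrow> 'a set \<Rightarrow> 'a set" where
  "setplus A B = {a + b | a b. a \<in> A \<and> b \<in> B}"

definition setmult :: "('a \<Rightarrow> 'a \<Rightarrow> 'a set) \<Rightarrow> 'a set \<Rightarrow> 'a set \<Rightarrow> 'a set" where
  "setmult m A B = (\<Union>a\<in>A. \<Union>b\<in>B. m a b)"

definition mult_hyperring :: "('a::ab_group_add \<Rightarrow> 'a \<Rightarrow> 'a set) \<Rightarrow> bool" where
  "mult_hyperring m \<longleftrightarrow>
     (\<forall>a b. m a b \<noteq> {}) \<and>
     (\<forall>a b c. setmult m {a} (m b c) = setmult m (m a b) {c}) \<and>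
     (\<forall>a b c. m a (b + c) \<subseteq> setplus (m a b) (m a c)) \<and>
     (\<forall>a b c. m (b + c) a \<subseteq> setplus (m b a) (m c a)) \<and>
     (\<forall>a b. m a (- b) = uminus ` (m a b) \<and> m (- a) b = uminus ` (m a b))"

definition hcommutative :: "('a \<Rightarrow> 'a \<Rightarrow> 'a set) \<Rightarrow> bool" where
  "hcommutative m \<longleftrightarrow> (\<forall>a b. m a b = m b a)"

definition has_identity :: "('a \<Rightarrow> 'a \<Rightarrow> 'a set) \<Rightarrow> bool" where
  "has_identity m \<longleftrightarrow> (\<exists>e. \<forall>a. a \<in> m e a)"

fun hprod :: "('a \<Rightarrow> 'a \<Rightarrow> 'a set) \<Rightarrow> 'a list \<Rightarrow> 'a set" where
  "hprod m [] = {}"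
| "hprod m [r] = {r}"
| "hprod m (r # rs) = setmult m {r} (hprod m rs)"

definition hyperideal :: "('a::ab_group_add \<Rightarrow> 'a \<Rightarrow> 'a set) \<Rightarrow> 'a set \<Rightarrow> bool" where
  "hyperideal m I \<longleftrightarrow> I \<noteq> {} \<and> (\<forall>x\<in>I. \<forall>y\<in>I. x - y \<in> I) \<and>
     (\<forall>r x. x \<in> I \<longrightarrow> m r x \<subseteq> I)"

definition C_hyperideal :: "('a::ab_group_add \<Rightarrow> 'a \<Rightarrow> 'a set) \<Rightarrow> 'a set \<Rightarrow> bool" where
  "C_hyperideal m I \<longleftrightarrow> hyperideal m I \<and>
     (\<forall>rs. rs \<noteq> [] \<longrightarrow> hprod m rs \<inter> I \<noteq> {} \<longrightarrow> hprod m rs \<subseteq> I)"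

definition colon :: "('a \<Rightarrow> 'a \<Rightarrow> 'a set) \<Rightarrow> 'a set \<Rightarrow> 'a set \<Rightarrow> 'a set" where
  "colon m I S = {r. \<forall>s\<in>S. m r s \<subseteq> I}"

definition good_endo :: "('a::ab_group_add \<Rightarrow> 'a \<Rightarrow> 'a set) \<Rightarrow> ('a \<Rightarrow> 'a) \<Rightarrow> bool" where
  "good_endo m \<alpha> \<longleftrightarrow> (\<forall>x y. \<alpha> (x + y) = \<alpha> x + \<alpha> y) \<and>
     (\<forall>x y. \<alpha> ` (m x y) = m (\<alpha> x) (\<alpha> y))"

definition alpha_prime :: "('a::ab_group_add \<Rightarrow> 'a \<Rightarrow> 'a set) \<Rightarrow> ('a \<Rightarrow> 'a) \<Rightarrow> 'a set \<Rightarrow> bool" where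
  "alpha_prime m \<alpha> I \<longleftrightarrow> hyperideal m I \<and>
     (\<forall>x y. m x y \<subseteq> I \<longrightarrow> x \<in> I \<or> \<alpha> y \<in> I)"

end

theory Submission
  imports Defs
begin

theorem mainTheorem7:
  fixes m :: "'a::ab_group_add \<Rightarrow> 'a \<Rightarrow> 'a set"
    and \<alpha> :: "'a \<Rightarrow> 'a" and I S :: "'a set"
  assumes "mult_hyperring m" and "hcommutative m" and "has_identity m"
    and "\<forall>J. hyperideal m J \<longrightarrow> C_hyperideal m J"
    and "good_endo m \<alpha>"
    and "alpha_prime m \<alpha> I"
  shows "alpha_prime m \<alpha> (colon m I S)"
proof -
  have assoc: "\<And>a b c. setmult m {a} (m b c) = setmult m (m a b) {c}"
    and distr: "\<And>a b c. m (b + c) a \<subseteq> setplus (m b a) (m c a)"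
    and neg: "\<And>a b. m (- a) b = uminus ` (m a b)"
    using assms(1) unfolding mult_hyperring_def by auto
  have comm: "\<And>a b. m a b = m b a" using assms(2) unfolding hcommutative_def by auto
  have hI: "hyperideal m I" and pr: "\<And>x y. m x y \<subseteq> I \<Longrightarrow> x \<in> I \<or> \<alpha> y \<in> I"
    using assms(6) unfolding alpha_prime_def by auto
  have Ine: "I \<noteq> {}" and Isub: "\<And>x y. x \<in> I \<Longrightarrow> y \<in> I \<Longrightarrow> x - y \<in> I"
    and Imul: "\<And>r x. x \<in> I \<Longrightarrow> m r x \<subseteq> I"
    using hI unfolding hyperideal_def by auto
  have sm: "\<And>A B z. z \<in> setmult m A B \<longleftrightarrow> (\<exists>a\<in>A. \<exists>b\<in>B. z \<in> m a b)"
    unfolding setmult_def by auto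
  have IC: "I \<subseteq> colon m I S"
    unfolding colon_def using Imul comm by auto
  have hC: "hyperideal m (colon m I S)"
    unfolding hyperideal_def
  proof (intro conjI allI ballI impI)
    show "colon m I S \<noteq> {}" using IC Ine by auto
  next
    fix x y assume x: "x \<in> colon m I S" and y: "y \<in> colon m I S"
    show "x - y \<in> colon m I S" unfolding colon_def
    proof (intro CollectI ballI subsetI)
      fix s z assume s: "s \<in> S" and z: "z \<in> m (x - y) s"
      have "z \<in> setplus (m x s) (m (- y) s)" using distr[where a=s and b=x and c="- y"] z by (metis diff_conv_add_uminus subsetD)
      then obtain a b where ab: "z = a + b" "a \<in> m x s" "b \<in> uminus ` m y s"
        unfolding setplus_def neg by auto
      then obtain c where c: "b = - c" "c \<in> m y s" by auto
      have "a \<in> I" "c \<in> I" using ab c x y s unfolding colon_def by auto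
      then have "a - c \<in> I" by (rule Isub)
      then show "z \<in> I" using ab c by simp
    qed
  next
    fix r x assume x: "x \<in> colon m I S"
    show "m r x \<subseteq> colon m I S" unfolding colon_def
    proof (intro subsetI CollectI ballI)
      fix z s w assume z: "z \<in> m r x" and s: "s \<in> S" and w: "w \<in> m z s"
      have "w \<in> setmult m (m r x) {s}" using z w sm by blast
      then have "w \<in> setmult m {r} (m x s)" using assoc by simp
      then obtain b where b: "b \<in> m x s" "w \<in> m r b" using sm by blast
      have "b \<in> I" using b x s unfolding colon_def by auto
      then show "w \<in> I" using Imul b by auto
    qed
  qed
  show ?thesis unfolding alpha_prime_def
  proof (intro conjI hC allI impI)
    fix x y assume xy: "m x y \<subseteq> colon m I S"
    have "\<alpha> y \<in> colon m I S" if "x \<notin> colon m I S"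
    proof -
      from that
      obtain s z where s: "s \<in> S" and z: "z \<in> m x s" and zI: "z \<notin> I"
        unfolding colon_def by auto
      have "m z y \<subseteq> I"
      proof
        fix w assume w: "w \<in> m z y"
        have "w \<in> setmult m (m x s) {y}" using z w sm by blast
        then have "w \<in> setmult m {x} (m s y)" using assoc by simp
        then have "w \<in> setmult m {x} (m y s)" using comm by simp
        then have "w \<in> setmult m (m x y) {s}" using assoc by simp
        then obtain u where u: "u \<in> m x y" "w \<in> m u s" using sm by blast
        then show "w \<in> I" using xy s unfolding colon_def by auto
      qed
      then have "\<alpha> y \<in> I" using pr zI by blast
      then show "\<alpha> y \<in> colon m I S" using IC by auto
    qed
    then show "x \<in> colon m I S \<or> \<alpha> y \<in> colon m I S" by blast
  qed
qed

end
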